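(* There is $C=C(\delta)<\infty$ such that the following holds in the setting described in the context: for any $i\in[k]$ there exists a set $V_i'\subseteq V_i$ with $|V_i'|\ge\delta^4n/80$ such that for every $v\in V_i'$, the random walk on $G^\rho$ started at $v$ satisfies \[ \Pr_v(\tau_\rho<\tau_{V\setminus V_i})\ge 1-C\varepsilon^2 . \]
   Context: Setting: $\delta\in(0,1]$, $\varepsilon>0$, $G=(V,E)$ is a connected simple graph on $n$ vertices with minimal degree at least $\delta n$, and $V=V_1\sqcup\dots\sqcup V_k$ is an $(\varepsilon,\delta,n^{1.5})$-good decomposition with parameter $\theta$; moreover $\sqrt n>1/(\theta\varepsilon^8)$. Here, writing $\deg(v,U)$ for the number of edges from $v$ to $U$ and $E(A,B)$ for edges between $A,B$, an $(\varepsilon,\delta,\beta)$-good decomposition with parameter $\theta\in[\varepsilon^{11\cdot2^{2/\delta}},\varepsilon]$ means: $k\le2/\delta$; $|V_i|\ge\delta n/2$; the spectral gap ($1-\lambda_2$ of the simple random walk transition matrix) of the induced graph $G[V_i]$ is at least $\frac{\delta^{15}\theta\beta}{2^{31}n^2}$; $\deg(v,V_i)\ge\delta^4n/40$ for $v\in V_i$; $|E(V_i,V\setminus V_i)|\le\varepsilon^9\theta^2\beta$, for all $i$. $G^\rho$ is the network obtained from $G$ (edges of weight 1) by adding a vertex $\rho$ joined to every $v\in V$ by an edge of weight $w(v,\rho)=\frac{\theta\varepsilon^4\deg_G(v)}{\sqrt n-\theta\varepsilon^4}$; the random walk moves along edges with probability proportional to their weights. For a set $A$, $\tau_A$ is the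 hitting time of $A$, and $\tau_\rho=\tau_{\{\rho\}}$. *)

theory Defs
  imports Complex_Main "HOL-Library.Multiset" "Jordan_Normal_Form.Char_Poly"
begin

definition simple_graph :: "nat set \<Rightarrow> (nat \<Rightarrow> nat \<Rightarrow> bool) \<Rightarrow> bool" where
  "simple_graph V E \<longleftrightarrow> finite V \<and> (\<forall>u v. E u v \<longrightarrow> u \<in> V \<and> v \<in> V)
     \<and> (\<forall>u v. E u v \<longrightarrow> E v u) \<and> (\<forall>u. \<not> E u u)"

definition connected_graph :: "nat set \<Rightarrow> (nat \<Rightarrow> nat \<Rightarrow> bool) \<Rightarrow> bool" where
  "connected_graph V E \<longleftrightarrow> (\<forall>u\<in>V. \<forall>v\<in>V. E\<^sup>*\<^sup>* u v)"

definition deg :: "(nat \<Rightarrow> nat \<Rightarrow> bool) \<Rightarrow> nat \<Rightarrow> nat set \<Rightarrow> nat" where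
  "deg E v U = card {u \<in> U. E v u}"

definition edges_between :: "(nat \<Rightarrow> nat \<Rightarrow> bool) \<Rightarrow> nat set \<Rightarrow> nat set \<Rightarrow> nat" where
  "edges_between E A B = card {(a, b). a \<in> A \<and> b \<in> B \<and> E a b}"

(* transition matrix of the simple random walk on the induced graph G[U],
   vertices of U enumerated in increasing order *)
definition srw_matrix :: "(nat \<Rightarrow> nat \<Rightarrow> bool) \<Rightarrow> nat set \<Rightarrow> real mat" where
  "srw_matrix E U = (let xs = sorted_list_of_set U in
     mat (length xs) (length xs)
       (\<lambda>(a, b). if E (xs ! a) (xs ! b) then 1 / real (deg E (xs ! a) U) else 0))"

(* multiset of (real) eigenvalues, counted with algebraic multiplicity *)
definition eig_mset :: "real mat \<Rightarrow> real multiset" where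
  "eig_mset A = Abs_multiset (\<lambda>x. order x (char_poly A))"

definition lambda2 :: "real mat \<Rightarrow> real" where
  "lambda2 A = rev (sorted_list_of_multiset (eig_mset A)) ! 1"

definition spectral_gap :: "(nat \<Rightarrow> nat \<Rightarrow> bool) \<Rightarrow> nat set \<Rightarrow> real" where
  "spectral_gap E U = 1 - lambda2 (srw_matrix E U)"

definition good_decomposition ::
  "real \<Rightarrow> real \<Rightarrow> real \<Rightarrow> real \<Rightarrow> nat set \<Rightarrow> (nat \<Rightarrow> nat \<Rightarrow> bool) \<Rightarrow> nat \<Rightarrow> (nat \<Rightarrow> nat set) \<Rightarrow> bool" where
  "good_decomposition \<epsilon> \<delta> \<beta> \<theta> V E k Vs \<longleftrightarrow>
     (let n = real (card V) in
     \<epsilon> powr (11 * 2 powr (2 / \<delta>)) \<le> \<theta> \<and> \<theta> \<le> \<epsilon> \<and>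
     (\<Union>i<k. Vs i) = V \<and> (\<forall>i<k. \<forall>j<k. i \<noteq> j \<longrightarrow> Vs i \<inter> Vs j = {}) \<and>
     real k \<le> 2 / \<delta> \<and>
     (\<forall>i<k. real (card (Vs i)) \<ge> \<delta> * n / 2 \<and>
        spectral_gap E (Vs i) \<ge> \<delta>^15 * \<theta> * \<beta> / (2^31 * n^2) \<and>
        (\<forall>v\<in>Vs i. real (deg E v (Vs i)) \<ge> \<delta>^4 * n / 40) \<and>
        real (edges_between E (Vs i) (V - Vs i)) \<le> \<epsilon>^9 * \<theta>^2 * \<beta>))"

definition walk_P :: "('s \<Rightarrow> 's \<Rightarrow> real) \<Rightarrow> 's set \<Rightarrow> 's \<Rightarrow> 's \<Rightarrow> real" where
  "walk_P w S x y = w x y / (\<Sum>z\<in>S. w x z)"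

(* probability, started at x, that the walk hits a at some time t' \<le> t and has
   not visited B at times 0..t' (i.e. tau_a \<le> t and tau_a < tau_B) *)
fun hit_within :: "('s \<Rightarrow> 's \<Rightarrow> real) \<Rightarrow> 's set \<Rightarrow> 's \<Rightarrow> 's set \<Rightarrow> nat \<Rightarrow> 's \<Rightarrow> real" where
  "hit_within P S a B 0 x = (if x \<in> B then 0 else if x = a then 1 else 0)"
| "hit_within P S a B (Suc t) x = (if x \<in> B then 0 else if x = a then 1
      else (\<Sum>y\<in>S. P x y * hit_within P S a B t y))"

(* Pr_x(tau_a < tau_B) = lim_t Pr_x(tau_a \<le> t, tau_a < tau_B) *)
definition hit_before :: "('s \<Rightarrow> 's \<Rightarrow> real) \<Rightarrow> 's set \<Rightarrow> 's \<Rightarrow> 's set \<Rightarrow> 's \<Rightarrow> real" where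
  "hit_before P S a B x = (SUP t. hit_within P S a B t x)"

(* The network G^rho: states Some v (v \<in> V) and rho = None *)
definition rho_states :: "nat set \<Rightarrow> nat option set" where
  "rho_states V = insert None (Some ` V)"

definition rho_weight ::
  "real \<Rightarrow> real \<Rightarrow> nat set \<Rightarrow> (nat \<Rightarrow> nat \<Rightarrow> bool) \<Rightarrow> nat option \<Rightarrow> nat option \<Rightarrow> real" where
  "rho_weight \<epsilon> \<theta> V E x y =
     (let n = real (card V);
          c = \<theta> * \<epsilon>^4 / (sqrt n - \<theta> * \<epsilon>^4) in
      case (x, y) of
        (Some u, Some v) \<Rightarrow> (if E u v then 1 else 0)
      | (Some u, None) \<Rightarrow> c * real (deg E u V)
      | (None, Some v) \<Rightarrow> c * real (deg E v V)
      | (None, None) \<Rightarrow> 0)"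

definition rho_P :: "real \<Rightarrow> real \<Rightarrow> nat set \<Rightarrow> (nat \<Rightarrow> nat \<Rightarrow> bool) \<Rightarrow> nat option \<Rightarrow> nat option \<Rightarrow> real" where
  "rho_P \<epsilon> \<theta> V E = walk_P (rho_weight \<epsilon> \<theta> V E) (rho_states V)"

end

theory Submission
  imports Defs
begin

lemma sum_ind_card: "finite A \<Longrightarrow> (\<Sum>u\<in>A. (if P u then 1 else 0::real)) = real (card {u\<in>A. P u})"
proof -
  assume "finite A"
  have "A \<inter> Collect P = {u\<in>A. P u}" by auto
  then show ?thesis using \<open>finite A\<close> by (simp add: sum.If_cases)
qed

lemma rowsum:
  assumes sg: "simple_graph V E" and v: "v \<in> V"
  shows "(\<Sum>z\<in>rho_states V. rho_weight \<epsilon> \<theta> V E (Some v) z)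
        = (\<theta> * \<epsilon>^4 / (sqrt (real (card V)) - \<theta> * \<epsilon>^4)) * real (deg E v V) + real (deg E v V)"
proof -
  have fin: "finite V" using sg by (simp add: simple_graph_def)
  have "(\<Sum>z\<in>rho_states V. rho_weight \<epsilon> \<theta> V E (Some v) z)
     = rho_weight \<epsilon> \<theta> V E (Some v) None + (\<Sum>z\<in>Some ` V. rho_weight \<epsilon> \<theta> V E (Some v) z)"
    unfolding rho_states_def using fin by (subst sum.insert) auto
  also have "(\<Sum>z\<in>Some ` V. rho_weight \<epsilon> \<theta> V E (Some v) z) = (\<Sum>u\<in>V. rho_weight \<epsilon> \<theta> V E (Some v) (Some u))"
    by (subst sum.reindex) (auto simp: inj_on_def)
  also have "\<dots> = (\<Sum>u\<in>V. (if E v u then 1 else 0))"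
    by (simp add: rho_weight_def)
  also have "\<dots> = real (deg E v V)"
    using fin by (simp add: sum_ind_card deg_def)
  finally show ?thesis by (simp add: rho_weight_def Let_def)
qed

lemma alg1:
  fixes d c X :: real
  assumes "d > 0" "c > 0"
  shows "d * (1 - c / (1 + c) - X / ((1 + c) * d)) = 1 / (1 + c) * (d - X)"
proof -
  have c1: "1 + c \<noteq> 0" using assms by simp
  have a: "d * (X / ((1 + c) * d)) = X / (1 + c)" using assms by simp
  have b: "d - d * (c / (1 + c)) = d / (1 + c)" using c1 by (simp add: field_simps)
  have "d * (1 - c / (1 + c) - X / ((1 + c) * d)) = (d - d * (c / (1 + c))) - d * (X / ((1 + c) * d))"
    by (simp add: algebra_simps)
  also have "\<dots> = d / (1 + c) - X / (1 + c)" using a b by simp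
  also have "\<dots> = 1 / (1 + c) * (d - X)" by (simp add: diff_divide_distrib)
  finally show ?thesis .
qed

lemma key:
  fixes \<epsilon> \<theta> \<delta> :: real and V Vi :: "nat set" and E
  assumes sg: "simple_graph V E" and eps: "0 < \<epsilon>" and th: "0 < \<theta>" and the: "\<theta> \<le> \<epsilon>"
    and e1: "\<epsilon> \<le> 1"
    and sq: "sqrt (real (card V)) > 1 / (\<theta> * \<epsilon>^8)"
    and dpos: "0 < \<delta>" and d1: "\<delta> \<le> 1"
    and mindeg: "\<forall>v\<in>V. real (deg E v V) \<ge> \<delta> * real (card V)"
    and ViV: "Vi \<subseteq> V" and cardVi: "real (card Vi) \<ge> \<delta> * real (card V) / 2"
    and eb: "real (edges_between E Vi (V - Vi)) \<le> \<epsilon>^9 * \<theta>^2 * (real (card V) powr 1.5)"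
  shows "\<exists>V' \<subseteq> Vi. real (card V') \<ge> \<delta>^4 * real (card V) / 80 \<and>
            (\<forall>v\<in>V'. hit_before (rho_P \<epsilon> \<theta> V E) (rho_states V) None (Some ` (V - Vi)) (Some v)
                       \<ge> 1 - (8 / \<delta>^2) * \<epsilon>^2)"
proof -
  define n where "n = real (card V)"
  define c where "c = \<theta> * \<epsilon>^4 / (sqrt n - \<theta> * \<epsilon>^4)"
  define s where "s = 1 / (1 + c)"
  define P where "P = rho_P \<epsilon> \<theta> V E"
  define S where "S = rho_states V"
  define B where "B = Some ` (V - Vi)"
  define h where "h t x = hit_within P S None B t x" for t x
  define d where "d v = real (deg E v V)" for v
  define e where "e = real (edges_between E Vi (V - Vi))"
  have fin: "finite V" using sg by (simp add: simple_graph_def)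
  have finVi: "finite Vi" using fin ViV finite_subset by blast
  have Eclosed: "E u v \<Longrightarrow> u \<in> V \<and> v \<in> V" for u v using sg by (simp add: simple_graph_def)
  have Esym: "E u v \<Longrightarrow> E v u" for u v using sg by (simp add: simple_graph_def)
  have t1: "\<theta> \<le> 1" using the e1 by linarith
  have e4: "\<epsilon>^4 \<le> 1" using e1 eps by (simp add: power_le_one)
  have e8: "\<epsilon>^8 \<le> 1" using e1 eps by (simp add: power_le_one)
  have te4: "\<theta> * \<epsilon>^4 \<le> 1" using t1 e4 th eps by (simp add: mult_le_one)
  have te8: "\<theta> * \<epsilon>^8 \<le> 1" using t1 e8 th eps by (simp add: mult_le_one)
  have te8p: "0 < \<theta> * \<epsilon>^8" using th eps by simp
  have te4p: "0 < \<theta> * \<epsilon>^4" using th eps by simp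
  have "1 \<le> 1 / (\<theta> * \<epsilon>^8)" using te8 te8p by simp
  hence sqn1: "sqrt n > 1" using sq unfolding n_def by linarith
  have npos: "n > 0"
  proof (rule ccontr)
    assume "\<not> n > 0" hence "n = 0" unfolding n_def by simp
    thus False using sqn1 by simp
  qed
  have sqgt: "sqrt n - \<theta> * \<epsilon>^4 > 0" using sqn1 te4 by linarith
  have cpos: "c > 0" unfolding c_def using sqgt te4p by simp
  have spos: "s > 0" and slt: "s < 1" unfolding s_def using cpos by auto
  have s1c: "s * (1 + c) = 1" unfolding s_def using cpos by simp
  have dge: "v \<in> V \<Longrightarrow> d v \<ge> \<delta> * n" for v using mindeg unfolding d_def n_def by auto
  have dposv: "v \<in> V \<Longrightarrow> d v > 0" for v using dge[of v] dpos npos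
    by (meson less_le_trans mult_pos_pos)
  have dle: "d v \<le> n" for v unfolding d_def n_def deg_def
    using fin by (simp add: card_mono)
  have rs: "v \<in> V \<Longrightarrow> (\<Sum>z\<in>S. rho_weight \<epsilon> \<theta> V E (Some v) z) = (1 + c) * d v" for v
    using rowsum[OF sg, of v \<epsilon> \<theta>] unfolding S_def c_def d_def n_def by (simp add: algebra_simps)
  have Pnone: "v \<in> V \<Longrightarrow> P (Some v) None = c / (1 + c)" for v
  proof -
    assume v: "v \<in> V"
    have "P (Some v) None = c * d v / ((1 + c) * d v)"
      unfolding P_def rho_P_def walk_P_def using rs[OF v] unfolding S_def
      by (simp add: rho_weight_def Let_def c_def n_def d_def)
    thus ?thesis using dposv[OF v] by simp
  qed
  have Psome: "v \<in> V \<Longrightarrow> P (Some v) (Some u) = (if E v u then 1 else 0) / ((1 + c) * d v)" for v u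
    unfolding P_def rho_P_def walk_P_def using rs unfolding S_def
    by (simp add: rho_weight_def Let_def)
  have hNone: "h t None = 1" for t unfolding h_def B_def by (cases t) auto
  have hB: "u \<in> V - Vi \<Longrightarrow> h t (Some u) = 0" for t u unfolding h_def B_def by (cases t) auto
  have sumE: "(\<Sum>u\<in>V. (if E v u then 1 else 0::real)) = d v" for v
    using fin by (simp add: sum_ind_card deg_def d_def)
  have rec: "v \<in> Vi \<Longrightarrow> h (Suc t) (Some v) =
      c / (1 + c) + (\<Sum>u\<in>V. (if E v u then 1 else 0) / ((1 + c) * d v) * h t (Some u))" for v t
  proof -
    assume v: "v \<in> Vi"
    hence vV: "v \<in> V" using ViV by auto
    have nb: "Some v \<notin> B" using v unfolding B_def by auto
    have "h (Suc t) (Some v) = (\<Sum>y\<in>S. P (Some v) y * h t y)"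
      unfolding h_def using nb by simp
    also have "\<dots> = P (Some v) None * h t None + (\<Sum>y\<in>Some ` V. P (Some v) y * h t y)"
      unfolding S_def rho_states_def using fin by (subst sum.insert) auto
    also have "(\<Sum>y\<in>Some ` V. P (Some v) y * h t y) = (\<Sum>u\<in>V. P (Some v) (Some u) * h t (Some u))"
      by (subst sum.reindex) (auto simp: inj_on_def)
    finally show ?thesis using Pnone[OF vV] Psome[OF vV] hNone by simp
  qed
  have bounds: "\<forall>u\<in>V. 0 \<le> h t (Some u) \<and> h t (Some u) \<le> 1" for t
  proof (induction t)
    case 0
    then show ?case unfolding h_def by auto
  next
    case (Suc t)
    show ?case
    proof
      fix v assume vV: "v \<in> V"
      show "0 \<le> h (Suc t) (Some v) \<and> h (Suc t) (Some v) \<le> 1"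
      proof (cases "v \<in> Vi")
        case False
        then show ?thesis using hB[of v] vV by auto
      next
        case True
        have dv: "d v > 0" using dposv vV by auto
        have nn: "0 \<le> (\<Sum>u\<in>V. (if E v u then 1 else 0) / ((1 + c) * d v) * h t (Some u))"
          using Suc.IH cpos dv by (intro sum_nonneg) auto
        have "(\<Sum>u\<in>V. (if E v u then 1 else 0) / ((1 + c) * d v) * h t (Some u))
            \<le> (\<Sum>u\<in>V. (if E v u then 1 else 0) / ((1 + c) * d v))"
          using Suc.IH cpos dv by (intro sum_mono) (auto intro!: divide_right_mono simp: less_imp_le)
        also have "\<dots> = (\<Sum>u\<in>V. (if E v u then 1 else 0)) / ((1 + c) * d v)"
          by (simp add: sum_divide_distrib)
        also have "\<dots> = 1 / (1 + c)" using sumE[of v] dv by simp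
        finally have up: "(\<Sum>u\<in>V. (if E v u then 1 else 0) / ((1 + c) * d v) * h t (Some u)) \<le> 1 / (1 + c)" .
        have "c / (1 + c) + 1 / (1 + c) = 1" using cpos by (simp add: field_simps)
        then show ?thesis using rec[OF True, of t] nn up cpos by auto
      qed
    qed
  qed
  define q where "q t u = 1 - h t (Some u)" for t u
  have q01: "u \<in> V \<Longrightarrow> 0 \<le> q t u \<and> q t u \<le> 1" for t u using bounds[of t] unfolding q_def by auto
  have qB: "u \<in> V - Vi \<Longrightarrow> q t u = 1" for t u using hB unfolding q_def by auto
  have qrec: "v \<in> Vi \<Longrightarrow> d v * q (Suc t) v = s * (\<Sum>u\<in>V. if E v u then q t u else 0)" for v t
  proof -
    assume v: "v \<in> Vi"
    hence vV: "v \<in> V" using ViV by auto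
    have dv: "d v > 0" using dposv vV by auto
    have A: "(\<Sum>u\<in>V. (if E v u then 1 else 0) / ((1 + c) * d v) * h t (Some u))
        = (\<Sum>u\<in>V. (if E v u then h t (Some u) else 0)) / ((1 + c) * d v)"
      unfolding sum_divide_distrib by (intro sum.cong refl) auto
    have Bq: "(\<Sum>u\<in>V. if E v u then q t u else 0) = (\<Sum>u\<in>V. (if E v u then 1 else 0::real)) - (\<Sum>u\<in>V. (if E v u then h t (Some u) else 0))"
      unfolding q_def sum_subtractf[symmetric] by (intro sum.cong refl) auto
    have "d v * q (Suc t) v = d v * (1 - c / (1 + c) - (\<Sum>u\<in>V. (if E v u then h t (Some u) else 0)) / ((1 + c) * d v))"
      unfolding q_def using rec[OF v, of t] A by simp
    also have "\<dots> = s * (d v - (\<Sum>u\<in>V. (if E v u then h t (Some u) else 0)))"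
      unfolding s_def using dv cpos by (rule alg1)
    finally show ?thesis using Bq sumE[of v] by simp
  qed
  have dqnn: "v \<in> Vi \<Longrightarrow> 0 \<le> d v * q t v" for v t
  proof -
    assume "v \<in> Vi"
    then have vV: "v \<in> V" using ViV by auto
    show "0 \<le> d v * q t v" using q01[OF vV, of t] dposv[OF vV] by simp
  qed
  define Q where "Q t = (\<Sum>v\<in>Vi. d v * q t v)" for t
  have ecount: "(\<Sum>v\<in>Vi. \<Sum>u\<in>V - Vi. if E v u then q t u else 0) = e" for t
  proof -
    have "(\<Sum>v\<in>Vi. \<Sum>u\<in>V - Vi. if E v u then q t u else 0) = (\<Sum>v\<in>Vi. \<Sum>u\<in>V - Vi. if E v u then 1 else 0)"
      using qB by (intro sum.cong refl) auto
    also have "\<dots> = (\<Sum>v\<in>Vi. real (card {u \<in> V - Vi. E v u}))"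
      using fin by (simp add: sum_ind_card)
    also have "\<dots> = real (\<Sum>v\<in>Vi. card {u \<in> V - Vi. E v u})" by simp
    also have "(\<Sum>v\<in>Vi. card {u \<in> V - Vi. E v u}) = card (SIGMA v:Vi. {u \<in> V - Vi. E v u})"
      using finVi fin by (subst card_SigmaI) auto
    also have "(SIGMA v:Vi. {u \<in> V - Vi. E v u}) = {(a, b). a \<in> Vi \<and> b \<in> V - Vi \<and> E a b}" by auto
    finally show ?thesis unfolding e_def edges_between_def by simp
  qed
  have inner: "(\<Sum>v\<in>Vi. \<Sum>u\<in>Vi. if E v u then q t u else 0) \<le> Q t" for t
  proof -
    have "(\<Sum>v\<in>Vi. \<Sum>u\<in>Vi. if E v u then q t u else 0) = (\<Sum>u\<in>Vi. \<Sum>v\<in>Vi. if E v u then q t u else 0)"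
      by (rule sum.swap)
    also have "\<dots> = (\<Sum>u\<in>Vi. q t u * real (card {v \<in> Vi. E u v}))"
    proof (intro sum.cong refl)
      fix u assume "u \<in> Vi"
      have "(\<Sum>v\<in>Vi. if E v u then q t u else 0) = (\<Sum>v\<in>Vi. q t u * (if E u v then 1 else 0))"
        using Esym by (intro sum.cong refl) auto
      also have "\<dots> = q t u * real (card {v \<in> Vi. E u v})"
        using finVi by (simp add: sum_distrib_left[symmetric] sum_ind_card)
      finally show "(\<Sum>v\<in>Vi. if E v u then q t u else 0) = q t u * real (card {v \<in> Vi. E u v})" .
    qed
    also have "\<dots> \<le> (\<Sum>u\<in>Vi. q t u * d u)"
    proof (intro sum_mono)
      fix u assume u: "u \<in> Vi"
      have "card {v \<in> Vi. E u v} \<le> card {v \<in> V. E u v}"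
        using fin ViV by (intro card_mono) auto
      hence "real (card {v \<in> Vi. E u v}) \<le> d u" unfolding d_def deg_def by simp
      moreover have "0 \<le> q t u" using q01 u ViV by auto
      ultimately show "q t u * real (card {v \<in> Vi. E u v}) \<le> q t u * d u" by (simp add: mult_left_mono)
    qed
    finally show ?thesis unfolding Q_def by (simp add: mult.commute)
  qed
  have Qstep: "Q (Suc t) \<le> s * (Q t + e)" for t
  proof -
    have "Q (Suc t) = (\<Sum>v\<in>Vi. s * (\<Sum>u\<in>V. if E v u then q t u else 0))"
      unfolding Q_def using qrec by (intro sum.cong refl) auto
    also have "\<dots> = s * (\<Sum>v\<in>Vi. (\<Sum>u\<in>V - Vi. if E v u then q t u else 0) + (\<Sum>u\<in>Vi. if E v u then q t u else 0))"
      using ViV fin by (simp add: sum_distrib_left sum.subset_diff[of Vi V])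
    also have "\<dots> = s * (e + (\<Sum>v\<in>Vi. \<Sum>u\<in>Vi. if E v u then q t u else 0))"
      using ecount[of t] by (simp add: sum.distrib)
    also have "\<dots> \<le> s * (e + Q t)" using inner[of t] spos by (intro mult_left_mono) auto
    finally show ?thesis by (simp add: add.commute)
  qed
  have Qbound: "Q t \<le> s^t * Q 0 + e / c" for t
  proof (induction t)
    case 0 then show ?case using cpos unfolding e_def by simp
  next
    case (Suc t)
    have "Q (Suc t) \<le> s * (Q t + e)" by (rule Qstep)
    also have "\<dots> \<le> s * (s^t * Q 0 + e / c + e)" using Suc.IH spos by (intro mult_left_mono) auto
    also have "\<dots> = s^(Suc t) * Q 0 + e * (s * (1 + c)) / c" using cpos by (simp add: field_simps)
    finally show ?case using s1c by simp
  qed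
  have Q0: "Q 0 \<le> n * n"
  proof -
    have "Q 0 \<le> (\<Sum>v\<in>Vi. n)" unfolding Q_def
    proof (intro sum_mono)
      fix v assume "v \<in> Vi"
      hence "0 \<le> q 0 v \<and> q 0 v \<le> 1" using q01 ViV by auto
      moreover have "0 \<le> d v" "d v \<le> n" using dle[of v] unfolding d_def by auto
      ultimately show "d v * q 0 v \<le> n" by (metis mult_left_le mult_left_mono order_trans)
    qed
    also have "\<dots> = real (card Vi) * n" by simp
    also have "\<dots> \<le> n * n" using card_mono[OF fin ViV] npos n_def by simp
    finally show ?thesis .
  qed
  have ebound: "e / c \<le> \<epsilon>^5 * \<theta> * n^2"
  proof -
    have e0: "0 \<le> e" unfolding e_def by simp
    have "e / c = e * (sqrt n - \<theta> * \<epsilon>^4) / (\<theta> * \<epsilon>^4)" unfolding c_def using te4p sqgt by simp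
    also have "\<dots> \<le> e * sqrt n / (\<theta> * \<epsilon>^4)"
      using e0 te4p by (intro divide_right_mono mult_left_mono) auto
    also have "\<dots> \<le> \<epsilon>^9 * \<theta>^2 * (n powr 1.5) * sqrt n / (\<theta> * \<epsilon>^4)"
      using eb te4p unfolding e_def n_def by (intro divide_right_mono mult_right_mono) auto
    also have "(n powr 1.5) * sqrt n = n^2"
    proof -
      have "(n powr 1.5) * sqrt n = n powr 1.5 * n powr (1/2)" using npos by (simp add: powr_half_sqrt)
      also have "\<dots> = n powr 2" by (simp add: powr_add[symmetric])
      finally show ?thesis using npos by simp
    qed
    hence "\<epsilon>^9 * \<theta>^2 * (n powr 1.5) * sqrt n / (\<theta> * \<epsilon>^4) = \<epsilon>^5 * \<theta> * n^2"
      using th eps by (simp add: field_simps power2_eq_square eval_nat_numeral)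
    finally show ?thesis .
  qed
  have "\<exists>t. s^t < \<epsilon>^5 * \<theta>" using slt th eps by (intro real_arch_pow_inv) auto
  then obtain t where st: "s^t < \<epsilon>^5 * \<theta>" by blast
  have "Q 0 \<ge> 0" unfolding Q_def
  proof (intro sum_nonneg)
    fix v assume "v \<in> Vi"
    then have vV: "v \<in> V" using ViV by auto
    show "0 \<le> d v * q 0 v" using q01[OF vV, of 0] dposv[OF vV] by simp
  qed
  moreover have "0 \<le> \<epsilon>^5 * \<theta>" using eps th by simp
  ultimately have "s^t * Q 0 \<le> \<epsilon>^5 * \<theta> * (n * n)" using st Q0
    by (intro mult_mono) auto
  hence Qt1: "Q t \<le> 2 * (\<epsilon>^5 * \<theta>) * n^2" using Qbound[of t] ebound by (simp add: power2_eq_square)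
  have "\<epsilon>^5 * \<theta> \<le> \<epsilon>^2"
  proof -
    have "\<epsilon>^3 * \<theta> \<le> 1" using e1 eps t1 th by (simp add: mult_le_one power_le_one)
    hence "\<epsilon>^2 * (\<epsilon>^3 * \<theta>) \<le> \<epsilon>^2 * 1" using eps by (intro mult_left_mono) auto
    thus ?thesis by (simp add: eval_nat_numeral algebra_simps)
  qed
  hence Qt: "Q t \<le> 2 * \<epsilon>^2 * n^2" using Qt1 npos
    by (smt (verit, best) mult_right_mono zero_le_power2)
  define C where "C = 8 / \<delta>^2"
  have Cpos: "C > 0" unfolding C_def using dpos by simp
  define V' where "V' = {v \<in> Vi. q t v \<le> C * \<epsilon>^2}"
  define Bd where "Bd = {v \<in> Vi. q t v > C * \<epsilon>^2}"
  have V'sub: "V' \<subseteq> Vi" unfolding V'_def by auto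
  have partition: "card Vi = card V' + card Bd"
  proof -
    have "Vi = V' \<union> Bd" "V' \<inter> Bd = {}" unfolding V'_def Bd_def by auto
    moreover have "finite V'" "finite Bd" using finVi unfolding V'_def Bd_def by auto
    ultimately show ?thesis by (metis card_Un_disjoint)
  qed
  have "(\<Sum>v\<in>Bd. \<delta> * n * (C * \<epsilon>^2)) \<le> (\<Sum>v\<in>Bd. d v * q t v)"
  proof (intro sum_mono)
    fix v assume v: "v \<in> Bd"
    hence vV: "v \<in> V" using ViV unfolding Bd_def by auto
    have "0 \<le> \<delta> * n" using dpos npos by simp
    moreover have "0 \<le> C * \<epsilon>^2" using Cpos by simp
    ultimately show "\<delta> * n * (C * \<epsilon>^2) \<le> d v * q t v"
      using dge[OF vV] v unfolding Bd_def by (intro mult_mono) auto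
  qed
  also have "\<dots> \<le> Q t" unfolding Q_def
    using finVi dqnn unfolding Bd_def
    by (intro sum_mono2) auto
  finally have "real (card Bd) * (\<delta> * n * (C * \<epsilon>^2)) \<le> 2 * \<epsilon>^2 * n^2" using Qt by simp
  hence "(real (card Bd) * \<delta> * C) * (\<epsilon>^2 * n) \<le> (2 * n) * (\<epsilon>^2 * n)"
    by (simp add: algebra_simps power2_eq_square)
  hence "real (card Bd) * \<delta> * C \<le> 2 * n" using eps npos by simp
  hence "real (card Bd) * (8 / \<delta>) \<le> 2 * n" unfolding C_def using dpos by (simp add: power2_eq_square)
  hence cB: "real (card Bd) \<le> \<delta> * n / 4" using dpos by (simp add: field_simps)
  have "\<delta>^4 \<le> \<delta>"
  proof -
    have "\<delta>^3 \<le> 1" using dpos d1 by (simp add: power_le_one)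
    hence "\<delta> * \<delta>^3 \<le> \<delta> * 1" using dpos by (intro mult_left_mono) auto
    thus ?thesis by (simp add: eval_nat_numeral algebra_simps)
  qed
  hence "\<delta>^4 * n / 80 \<le> \<delta> * n / 4" using npos dpos by (simp add: divide_right_mono mult_right_mono)
  moreover have "real (card Vi) = real (card V') + real (card Bd)" using partition by simp
  moreover have "\<delta> * n / 2 \<le> real (card Vi)" using cardVi unfolding n_def .
  ultimately have "\<delta>^4 * n / 80 \<le> real (card V')" using cB by linarith
  hence card': "real (card V') \<ge> \<delta>^4 * real (card V) / 80" unfolding n_def .
  have hit: "\<forall>v\<in>V'. hit_before P S None B (Some v) \<ge> 1 - C * \<epsilon>^2"
  proof
    fix v assume v: "v \<in> V'"
    hence vV: "v \<in> V" using V'sub ViV by auto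
    have bdd: "bdd_above (range (\<lambda>t. hit_within P S None B t (Some v)))"
      using bounds vV unfolding h_def by (intro bdd_aboveI2[where M=1]) auto
    have "1 - C * \<epsilon>^2 \<le> h t (Some v)" using v unfolding V'_def q_def by auto
    also have "\<dots> \<le> (SUP t. hit_within P S None B t (Some v))"
      unfolding h_def by (rule cSUP_upper[OF _ bdd]) auto
    finally show "hit_before P S None B (Some v) \<ge> 1 - C * \<epsilon>^2" unfolding hit_before_def .
  qed
  show ?thesis using V'sub card' hit unfolding P_def S_def B_def C_def by blast
qed

theorem claim3p6:
  fixes \<delta> :: real
  assumes "0 < \<delta>" and "\<delta> \<le> 1"
  shows "\<exists>C::real. \<forall>(\<epsilon>::real) (\<theta>::real) (V::nat set) (E::nat \<Rightarrow> nat \<Rightarrow> bool) (k::nat) (Vs::nat \<Rightarrow> nat set).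
     \<epsilon> > 0 \<and> simple_graph V E \<and> connected_graph V E \<and>
     (\<forall>v\<in>V. real (deg E v V) \<ge> \<delta> * real (card V)) \<and>
     good_decomposition \<epsilon> \<delta> (real (card V) powr 1.5) \<theta> V E k Vs \<and>
     sqrt (real (card V)) > 1 / (\<theta> * \<epsilon>^8)
     \<longrightarrow> (\<forall>i<k. \<exists>V' \<subseteq> Vs i. real (card V') \<ge> \<delta>^4 * real (card V) / 80 \<and>
            (\<forall>v\<in>V'. hit_before (rho_P \<epsilon> \<theta> V E) (rho_states V) None (Some ` (V - Vs i)) (Some v)
                       \<ge> 1 - C * \<epsilon>^2))"
proof (intro exI[of _ "8 / \<delta>^2"] allI impI)
  fix \<epsilon> \<theta> :: real and V :: "nat set" and E k Vs i
  assume H: "\<epsilon> > 0 \<and> simple_graph V E \<and> connected_graph V E \<and>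
     (\<forall>v\<in>V. real (deg E v V) \<ge> \<delta> * real (card V)) \<and>
     good_decomposition \<epsilon> \<delta> (real (card V) powr 1.5) \<theta> V E k Vs \<and>
     sqrt (real (card V)) > 1 / (\<theta> * \<epsilon>^8)"
    and ik: "i < k"
  have eps: "\<epsilon> > 0" and sg: "simple_graph V E"
    and mindeg: "\<forall>v\<in>V. real (deg E v V) \<ge> \<delta> * real (card V)"
    and gd: "good_decomposition \<epsilon> \<delta> (real (card V) powr 1.5) \<theta> V E k Vs"
    and sq: "sqrt (real (card V)) > 1 / (\<theta> * \<epsilon>^8)" using H by auto
  define L where "L = 11 * 2 powr (2 / \<delta>)"
  have lo: "\<epsilon> powr L \<le> \<theta>" and the: "\<theta> \<le> \<epsilon>"
    and un: "(\<Union>i<k. Vs i) = V"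
    and cardVi: "real (card (Vs i)) \<ge> \<delta> * real (card V) / 2"
    and eb: "real (edges_between E (Vs i) (V - Vs i)) \<le> \<epsilon>^9 * \<theta>^2 * (real (card V) powr 1.5)"
    using gd ik unfolding good_decomposition_def Let_def L_def by auto
  have th: "\<theta> > 0" using lo eps by (metis less_le_trans powr_gt_zero less_irrefl order.not_eq_order_implies_strict)
  have L1: "L > 1"
  proof -
    have "1 \<le> 2 powr (2 / \<delta>)" using assms by (intro ge_one_powr_ge_zero) auto
    thus ?thesis unfolding L_def by simp
  qed
  have e1: "\<epsilon> \<le> 1"
  proof (rule ccontr)
    assume "\<not> \<epsilon> \<le> 1"
    hence "\<epsilon> > 1" by simp
    hence "\<epsilon> powr 1 < \<epsilon> powr L" using L1 by (simp only: powr_less_cancel_iff)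
    thus False using lo the eps by simp
  qed
  have ViV: "Vs i \<subseteq> V" using un ik by auto
  show "\<exists>V' \<subseteq> Vs i. real (card V') \<ge> \<delta>^4 * real (card V) / 80 \<and>
            (\<forall>v\<in>V'. hit_before (rho_P \<epsilon> \<theta> V E) (rho_states V) None (Some ` (V - Vs i)) (Some v)
                       \<ge> 1 - 8 / \<delta>^2 * \<epsilon>^2)"
    by (rule key[OF sg eps th the e1 sq assms mindeg ViV cardVi eb])
qed

end
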